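(* Every $F_2$-free split graph is hereditarily connected-domishold.
   Context: A graph is split if its vertex set can be partitioned into a clique and an independent set. $F_2$ is the graph obtained from $K_4$ on $\{a,b,c,d\}$ by adding a new vertex adjacent exactly to $a$ and $b$ and another new vertex adjacent exactly to $c$ and $d$. A connected dominating set of a connected graph $G$ is a set $S\subseteq V(G)$ such that every vertex outside $S$ has a neighbor in $S$ and $G[S]$ is connected; $G$ is connected-domishold if there exist $w:V(G)\to\mathbb{R}_{\ge0}$, $t\in\mathbb{R}_{\ge0}$ with $\sum_{x\in S}w(x)\ge t$ iff $S$ is a connected dominating set, for all $S$; disconnected graphs are connected-domishold by convention. $G$ is hereditarily connected-domishold if every induced subgraph is connected-domishold. *)

theory Defs
  imports Complex_Main
begin

text \<open>A finite simple graph is given by a vertex set V and an adjacency relation E,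
  symmetric and irreflexive; only edges between vertices of V matter.\<close>

definition simple_graph :: "'a set \<Rightarrow> ('a \<Rightarrow> 'a \<Rightarrow> bool) \<Rightarrow> bool" where
  "simple_graph V E \<longleftrightarrow> finite V \<and> (\<forall>x y. E x y \<longrightarrow> E y x) \<and> (\<forall>x. \<not> E x x)"

text \<open>Connectedness of the induced subgraph on a vertex set S (the null graph is not connected).\<close>
definition connected_on :: "'a set \<Rightarrow> ('a \<Rightarrow> 'a \<Rightarrow> bool) \<Rightarrow> bool" where
  "connected_on S E \<longleftrightarrow> S \<noteq> {} \<and>
     (\<forall>x\<in>S. \<forall>y\<in>S. (\<lambda>a b. a \<in> S \<and> b \<in> S \<and> E a b)\<^sup>*\<^sup>* x y)"

definition is_clique :: "'a set \<Rightarrow> ('a \<Rightarrow> 'a \<Rightarrow> bool) \<Rightarrow> bool" where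
  "is_clique K E \<longleftrightarrow> (\<forall>x\<in>K. \<forall>y\<in>K. x \<noteq> y \<longrightarrow> E x y)"

definition is_independent :: "'a set \<Rightarrow> ('a \<Rightarrow> 'a \<Rightarrow> bool) \<Rightarrow> bool" where
  "is_independent I E \<longleftrightarrow> (\<forall>x\<in>I. \<forall>y\<in>I. \<not> E x y)"

definition split_graph :: "'a set \<Rightarrow> ('a \<Rightarrow> 'a \<Rightarrow> bool) \<Rightarrow> bool" where
  "split_graph V E \<longleftrightarrow> (\<exists>K I. K \<inter> I = {} \<and> K \<union> I = V \<and> is_clique K E \<and> is_independent I E)"

text \<open>F_2 on vertices 0..5: K4 on a=0,b=1,c=2,d=3; vertex 4 adjacent to 0,1; vertex 5 adjacent to 2,3.\<close>
definition F2_edge :: "nat \<Rightarrow> nat \<Rightarrow> bool" where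
  "F2_edge i j \<longleftrightarrow> i \<noteq> j \<and>
     ((i < 4 \<and> j < 4) \<or> ({i, j} = {4, 0}) \<or> ({i, j} = {4, 1}) \<or>
      ({i, j} = {5, 2}) \<or> ({i, j} = {5, 3}))"

definition contains_induced_F2 :: "'a set \<Rightarrow> ('a \<Rightarrow> 'a \<Rightarrow> bool) \<Rightarrow> bool" where
  "contains_induced_F2 V E \<longleftrightarrow> (\<exists>f :: nat \<Rightarrow> 'a. inj_on f {0..<6} \<and> f ` {0..<6} \<subseteq> V \<and>
     (\<forall>i\<in>{0..<6}. \<forall>j\<in>{0..<6}. E (f i) (f j) \<longleftrightarrow> F2_edge i j))"

definition F2_free :: "'a set \<Rightarrow> ('a \<Rightarrow> 'a \<Rightarrow> bool) \<Rightarrow> bool" where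
  "F2_free V E \<longleftrightarrow> \<not> contains_induced_F2 V E"

definition connected_dominating_set :: "'a set \<Rightarrow> ('a \<Rightarrow> 'a \<Rightarrow> bool) \<Rightarrow> 'a set \<Rightarrow> bool" where
  "connected_dominating_set V E S \<longleftrightarrow> S \<subseteq> V \<and> (\<forall>v\<in>V - S. \<exists>u\<in>S. E v u) \<and> connected_on S E"

definition connected_domishold :: "'a set \<Rightarrow> ('a \<Rightarrow> 'a \<Rightarrow> bool) \<Rightarrow> bool" where
  "connected_domishold V E \<longleftrightarrow> \<not> connected_on V E \<or>
     (\<exists>(w :: 'a \<Rightarrow> real) (t :: real). (\<forall>x\<in>V. w x \<ge> 0) \<and> t \<ge> 0 \<and>
        (\<forall>S. S \<subseteq> V \<longrightarrow> (sum w S \<ge> t \<longleftrightarrow> connected_dominating_set V E S)))"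

definition hereditarily_connected_domishold :: "'a set \<Rightarrow> ('a \<Rightarrow> 'a \<Rightarrow> bool) \<Rightarrow> bool" where
  "hereditarily_connected_domishold V E \<longleftrightarrow> (\<forall>U. U \<subseteq> V \<longrightarrow> connected_domishold U E)"

end

theory Submission
  imports Defs
begin

definition sp1 :: "'a set set \<Rightarrow> bool" where
  "sp1 H \<longleftrightarrow> (\<forall>A\<in>H. \<forall>B\<in>H. card (A - B) \<le> 1 \<or> card (B - A) \<le> 1)"

lemma card1_single: "finite A \<Longrightarrow> card A = 1 \<Longrightarrow> x \<in> A \<Longrightarrow> A = {x}"
  by (metis card_1_singletonE singletonD)

lemma zlemma:
  assumes fin: "\<forall>A\<in>M. finite A" and fM: "finite M"
    and clut: "\<forall>A\<in>M. \<forall>B\<in>M. A \<subseteq> B \<longrightarrow> A = B"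
    and sp: "sp1 M" and ne: "M \<noteq> {}" and nemp: "{} \<notin> M"
  shows "\<exists>z. (\<exists>a\<in>M. z \<in> a) \<and> (\<forall>a\<in>M. \<forall>b\<in>M. z \<in> a \<longrightarrow> z \<notin> b \<longrightarrow> a - {z} \<subseteq> b)"
proof -
  have clutR: "\<And>A B. A \<in> M \<Longrightarrow> B \<in> M \<Longrightarrow> A \<subseteq> B \<Longrightarrow> A = B" using clut by blast
  have spR: "\<And>A B. A \<in> M \<Longrightarrow> B \<in> M \<Longrightarrow> card (A - B) \<le> 1 \<or> card (B - A) \<le> 1"
    using sp unfolding sp1_def by blast
  obtain f0 where f0M: "f0 \<in> M" and f0min: "\<forall>g\<in>M. card f0 \<le> card g"
    using ex_has_least_nat[of "\<lambda>A. A \<in> M" _ card] ne by blast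
  have F: "card (f0 - g) = 1" if gM: "g \<in> M" and gne: "g \<noteq> f0" for g
  proof -
    have ff: "finite f0" "finite g" using fin f0M gM by auto
    have n1: "f0 - g \<noteq> {}"
    proof
      assume "f0 - g = {}" then have "f0 \<subseteq> g" by blast
      then show False using clutR[OF f0M gM] gne by simp
    qed
    have n2: "g - f0 \<noteq> {}"
    proof
      assume "g - f0 = {}" then have "g \<subseteq> f0" by blast
      then show False using clutR[OF gM f0M] gne by simp
    qed
    have c1: "card f0 = card (f0 \<inter> g) + card (f0 - g)" using card_Int_Diff ff by blast
    have c2: "card g = card (g \<inter> f0) + card (g - f0)" using card_Int_Diff ff by blast
    have c2': "card g = card (f0 \<inter> g) + card (g - f0)" using c2 by (simp add: Int_commute)
    moreover have "card f0 \<le> card g" using f0min gM by blast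
    moreover have "card (f0 - g) > 0" "card (g - f0) > 0" using n1 n2 ff by auto
    moreover have "card (f0 - g) \<le> 1 \<or> card (g - f0) \<le> 1" using spR[OF f0M gM] .
    ultimately show ?thesis using c1 by linarith
  qed
  show ?thesis
  proof (cases "M = {f0}")
    case True
    then obtain z where "z \<in> f0" using nemp f0M by blast
    then show ?thesis using True by blast
  next
    case False
    then have "M - {f0} \<noteq> {}" using f0M by blast
    then have "Max (card ` (M - {f0})) \<in> card ` (M - {f0})" using fM by (intro Max_in) auto
    then obtain e where eM: "e \<in> M - {f0}" and eq: "card e = Max (card ` (M - {f0}))" by (metis imageE)
    have eM': "e \<in> M" using eM by simp
    have emax: "\<forall>g\<in>M - {f0}. card g \<le> card e" unfolding eq using fM by (auto intro: Max_ge)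
    have "card (f0 - e) = 1" using F eM by blast
    then obtain z where fz: "f0 - e = {z}" using card_1_singletonE by blast
    have zf0: "z \<in> f0" and ze: "z \<notin> e" using fz by auto
    have good: "a - {z} \<subseteq> b" if aM: "a \<in> M" and bM: "b \<in> M" and za: "z \<in> a" and zb: "z \<notin> b" for a b
    proof
      fix x assume xa: "x \<in> a - {z}"
      have bf0: "b \<noteq> f0" using zb zf0 by blast
      have fin3: "finite a" "finite b" "finite e" "finite f0" using fin aM bM eM f0M by auto
      have "f0 - b = {z}" using card1_single[OF _ F[OF bM bf0]] zb zf0 fin3(4) by simp
      then have f0b: "f0 - {z} \<subseteq> b" by blast
      show "x \<in> b"
      proof (cases "a = f0")
        case True then show ?thesis using f0b xa by blast
      next
        case af: False
        have "card (f0 - a) = 1" using F aM af by blast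
        then obtain y where fy: "f0 - a = {y}" using card_1_singletonE by blast
        have yz: "y \<noteq> z" using fy za by blast
        show ?thesis
        proof (cases "x \<in> f0")
          case True then show ?thesis using f0b xa by blast
        next
          case xf: False
          show ?thesis
          proof (rule ccontr)
            assume xb: "x \<notin> b"
            have "z \<in> a - b" "x \<in> a - b" "x \<noteq> z" using za zb xa xb by auto
            then have "\<not> card (a - b) \<le> 1" using card_le_Suc0_iff_eq[of "a - b"] fin3 by auto
            then have "card (b - a) \<le> 1" using spR[OF aM bM] by simp
            moreover have yba: "y \<in> b - a" using fy f0b yz by blast
            ultimately have "b - a = {y}" using card_le_Suc0_iff_eq[of "b - a"] fin3 by auto
            then have bfa: "b - f0 \<subseteq> a" using fy by blast
            have ye: "y \<in> e" using fz fy yz by blast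
            have afe: "a - f0 \<subseteq> e"
            proof -
              have "card (a - e) \<le> 1 \<or> card (e - a) \<le> 1" using spR[OF aM eM'] .
              then show ?thesis
              proof
                assume "card (a - e) \<le> 1"
                moreover have "z \<in> a - e" using za ze by blast
                ultimately have "a - e = {z}" using card_le_Suc0_iff_eq[of "a - e"] fin3 by auto
                then have ae: "\<And>v. v \<in> a \<Longrightarrow> v \<notin> e \<Longrightarrow> v = z" by blast
                show ?thesis
                proof
                  fix v assume "v \<in> a - f0"
                  then show "v \<in> e" using ae[of v] zf0 by auto
                qed
              next
                assume "card (e - a) \<le> 1"
                moreover have "y \<in> e - a" using ye fy by blast
                ultimately have "e - a = {y}" using card_le_Suc0_iff_eq[of "e - a"] fin3 by auto
                then have sub: "e - f0 \<subseteq> a - f0" using fy by blast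
                have ca: "card a = card (a \<inter> f0) + card (a - f0)" using card_Int_Diff fin3 by blast
                have ce: "card e = card (e \<inter> f0) + card (e - f0)" using card_Int_Diff fin3 by blast
                have c0a: "card f0 = card (f0 \<inter> a) + card (f0 - a)" using card_Int_Diff fin3 by blast
                have c0e: "card f0 = card (f0 \<inter> e) + card (f0 - e)" using card_Int_Diff fin3 by blast
                have "a \<inter> f0 = f0 \<inter> a" "e \<inter> f0 = f0 \<inter> e" by blast+
                then have ca': "card a = card (f0 \<inter> a) + card (a - f0)" and ce': "card e = card (f0 \<inter> e) + card (e - f0)"
                  using ca ce by simp_all
                moreover have "card (f0 - a) = 1" "card (f0 - e) = 1" using fy fz by auto
                moreover have "card a \<le> card e" using emax aM af by blast
                ultimately have "card (a - f0) \<le> card (e - f0)" using c0a c0e by linarith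
                then have "e - f0 = a - f0"
                  using card_subset_eq[OF _ sub] card_mono[OF _ sub] fin3 by (meson finite_Diff le_antisym)
                then show ?thesis by blast
              qed
            qed
            have "b \<subseteq> e"
            proof
              fix v assume vb: "v \<in> b"
              show "v \<in> e"
              proof (cases "v \<in> f0")
                case True
                have "v \<in> f0 - e \<Longrightarrow> v = z" using fz by simp
                then show ?thesis using True vb zb by blast
              next
                case False
                then show ?thesis using vb bfa afe by blast
              qed
            qed
            then have "b = e" using clutR[OF bM eM'] by blast
            then show False using xb xa xf afe by blast
          qed
        qed
      qed
    qed
    show ?thesis using good zf0 f0M by blast
  qed
qed

lemma sp1_img:
  assumes sp: "sp1 H" and fin: "\<forall>A\<in>H. finite A" and sub: "S' \<subseteq> H"
  shows "sp1 ((\<lambda>A. A - C) ` S')"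
  unfolding sp1_def
proof (intro ballI)
  fix A B assume "A \<in> (\<lambda>A. A - C) ` S'" "B \<in> (\<lambda>A. A - C) ` S'"
  then obtain a b where ab: "a \<in> H" "b \<in> H" "A = a - C" "B = b - C" using sub by blast
  have "card (A - B) \<le> card (a - b)" using ab fin by (intro card_mono) auto
  moreover have "card (B - A) \<le> card (b - a)" using ab fin by (intro card_mono) auto
  moreover have "card (a - b) \<le> 1 \<or> card (b - a) \<le> 1" using sp ab unfolding sp1_def by blast
  ultimately show "card (A - B) \<le> 1 \<or> card (B - A) \<le> 1" by linarith
qed

lemma mult_step: "a + 1 \<le> b \<Longrightarrow> c * a + c \<le> (c::nat) * b"
  by (metis add_mult_distrib2 mult.right_neutral mult_le_mono2)

lemma thr:
  assumes "finite G" "\<forall>A\<in>H. A \<subseteq> G" "sp1 H"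
  shows "\<exists>(w::'a\<Rightarrow>nat) t. \<forall>X. X \<subseteq> G \<longrightarrow> ((\<exists>A\<in>H. A \<subseteq> X) \<longleftrightarrow> t \<le> sum w X)"
  using assms
proof (induction "card G" arbitrary: G H rule: less_induct)
  case less
  show ?case
  proof (cases "{} \<in> H")
    case True
    show ?thesis by (rule exI[of _ "\<lambda>_. 0"], rule exI[of _ 0]) (use True in auto)
  next
    case nE: False
    show ?thesis
    proof (cases "H = {}")
      case True
      show ?thesis by (rule exI[of _ "\<lambda>_. 0"], rule exI[of _ 1]) (use True in auto)
    next
      case hne: False
      define M where "M = {A\<in>H. \<forall>B\<in>H. B \<subseteq> A \<longrightarrow> B = A}"
      have finH: "\<forall>A\<in>H. finite A"
      proof
        fix A assume "A\<in>H" then have "A \<subseteq> G" using less.prems(2) by blast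
        then show "finite A" using less.prems(1) by (rule finite_subset)
      qed
      have Mmin: "\<exists>B\<in>M. B \<subseteq> A" if AH: "A \<in> H" for A
      proof -
        obtain B where B: "B\<in>H \<and> B \<subseteq> A" and Bm: "\<forall>C. C\<in>H \<and> C \<subseteq> A \<longrightarrow> card B \<le> card C"
          using ex_has_least_nat[of "\<lambda>B. B\<in>H \<and> B\<subseteq>A" A card] AH by blast
        have "B \<in> M" unfolding M_def
        proof (intro CollectI conjI ballI impI)
          show "B\<in>H" using B by blast
          fix C assume C: "C\<in>H" "C\<subseteq>B"
          then have "card B \<le> card C" using Bm B by blast
          moreover have "finite B" using finH B by blast
          ultimately show "C = B" using card_subset_eq C by (metis card_mono le_antisym)
        qed
        then show ?thesis using B by blast
      qed
      have MH: "M \<subseteq> H" unfolding M_def by blast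
      have contain: "(\<exists>A\<in>H. A\<subseteq>X) \<longleftrightarrow> (\<exists>A\<in>M. A\<subseteq>X)" for X
        using Mmin MH by (meson order_trans subsetD)
      have "M \<subseteq> Pow G" using MH less.prems(2) by blast
      then have finM: "finite M" using finite_subset less.prems(1) by (metis finite_Pow_iff)
      have clut: "\<forall>A\<in>M. \<forall>B\<in>M. A \<subseteq> B \<longrightarrow> A = B" unfolding M_def by blast
      have spM: "sp1 M" using less.prems(3) MH unfolding sp1_def by blast
      have Mne: "M \<noteq> {}" using hne Mmin by blast
      have Mnemp: "{} \<notin> M" using nE MH by blast
      have finM': "\<forall>A\<in>M. finite A" using finH MH by blast
      obtain z where zex: "\<exists>a\<in>M. z\<in>a" and zgood: "\<forall>a\<in>M. \<forall>b\<in>M. z\<in>a \<longrightarrow> z\<notin>b \<longrightarrow> a-{z} \<subseteq> b"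
        using zlemma[OF finM' finM clut spM Mne Mnemp] by blast
      define H1 where "H1 = (\<lambda>a. a - {z}) ` {a\<in>M. z\<in>a}"
      define U where "U = \<Union>H1"
      define H2 where "H2 = (\<lambda>b. b - U) ` {b\<in>M. z\<notin>b}"
      define G2 where "G2 = G - insert z U"
      have zG: "z\<in>G" using zex MH less.prems(2) by blast
      have UG: "U \<subseteq> G - {z}" unfolding U_def H1_def using MH less.prems(2) by auto
      have zU: "z \<notin> U" using UG by blast
      have cU: "card U < card G" using UG zG less.prems(1) by (intro psubset_card_mono) auto
      have cG2: "card G2 < card G" unfolding G2_def using zG less.prems(1) by (intro psubset_card_mono) auto
      have "U \<subseteq> G" using UG by blast
      then have fU: "finite U" using less.prems(1) by (rule finite_subset)
      have fG2: "finite G2" unfolding G2_def using less.prems(1) by simp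
      have H1U: "\<forall>A\<in>H1. A \<subseteq> U" unfolding U_def by blast
      have H2G2: "\<forall>A\<in>H2. A \<subseteq> G2" unfolding H2_def G2_def using MH less.prems(2) by blast
      have sp1: "sp1 H1" unfolding H1_def by (rule sp1_img[OF spM finM']) blast
      have sp2: "sp1 H2" unfolding H2_def by (rule sp1_img[OF spM finM']) blast
      obtain w1 :: "'a \<Rightarrow> nat" and t1 :: nat where th1: "\<forall>X. X \<subseteq> U \<longrightarrow> ((\<exists>A\<in>H1. A \<subseteq> X) \<longleftrightarrow> t1 \<le> sum w1 X)"
        using less.hyps[OF cU fU H1U sp1] by blast
      obtain w2 :: "'a \<Rightarrow> nat" and t2 :: nat where th2: "\<forall>X. X \<subseteq> G2 \<longrightarrow> ((\<exists>A\<in>H2. A \<subseteq> X) \<longleftrightarrow> t2 \<le> sum w2 X)"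
        using less.hyps[OF cG2 fG2 H2G2 sp2] by blast
      have bU: "\<forall>b\<in>M. z\<notin>b \<longrightarrow> U \<subseteq> b" unfolding U_def H1_def using zgood by blast
      have pos: "1 \<le> w1 u" if uU: "u\<in>U" for u
      proof -
        obtain a where aM: "a\<in>M" "z\<in>a" and ua: "u \<in> a - {z}" using uU unfolding U_def H1_def by blast
        have s1: "a - {z} \<subseteq> U" unfolding U_def H1_def using aM by blast
        have "\<exists>A\<in>H1. A \<subseteq> a - {z}" unfolding H1_def using aM by blast
        then have t1a: "t1 \<le> sum w1 (a - {z})" by (rule iffD1[OF th1[rule_format, OF s1]])
        have "\<not>(\<exists>A\<in>H1. A \<subseteq> a - {z} - {u})"
        proof
          assume "\<exists>A\<in>H1. A \<subseteq> a - {z} - {u}"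
          then obtain a' where a': "a'\<in>M" "z\<in>a'" "a' - {z} \<subseteq> a - {z} - {u}" unfolding H1_def by blast
          then have "a' \<subseteq> a" using aM by blast
          then have "a' = a" using clut a' aM by blast
          then show False using a' ua by blast
        qed
        moreover have s1': "a - {z} - {u} \<subseteq> U" using s1 by blast
        ultimately have "\<not> t1 \<le> sum w1 (a-{z}-{u})" using th1[rule_format, OF s1'] by simp
        then have "sum w1 (a-{z}-{u}) < t1" by simp
        moreover have "sum w1 (a-{z}) = w1 u + sum w1 (a-{z}-{u})"
          using ua finM' aM by (simp add: sum.remove)
        ultimately show "1 \<le> w1 u" using t1a by linarith
      qed
      define W1 where "W1 = sum w1 U"
      define W2 where "W2 = sum w2 G2"
      have t1W: "t1 \<le> W1"
      proof -
        obtain a where "a\<in>M" "z\<in>a" using zex by blast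
        then have "\<exists>A\<in>H1. A \<subseteq> U" unfolding H1_def U_def by blast
        then show ?thesis unfolding W1_def by (rule iffD1[OF th1[rule_format, OF order_refl]])
      qed
      define c where "c = W2 + 1"
      define wz where "wz = c * (W1 - t1) + t2"
      define w where "w = (\<lambda>v. if v = z then wz else if v \<in> U then c * w1 v else w2 v)"
      define T where "T = c * W1 + t2"
      show ?thesis
      proof (rule exI[of _ w], rule exI[of _ T], intro allI impI)
        fix X assume XG: "X \<subseteq> G"
        have finX: "finite X" using XG less.prems(1) finite_subset by blast
        define s1 where "s1 = sum w1 (X \<inter> U)"
        define s2 where "s2 = sum w2 (X \<inter> G2)"
        have sumw: "sum w X = (if z \<in> X then wz else 0) + c * s1 + s2"
        proof -
          have a1: "sum w X = sum w (X \<inter> U) + sum w (X - U)" using finX by (rule sum.Int_Diff)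
          have a2: "sum w (X - U) = sum w ((X - U) \<inter> {z}) + sum w ((X - U) - {z})" using finX by (intro sum.Int_Diff) auto
          have a3: "(X - U) \<inter> {z} = (if z\<in>X then {z} else {})" using zU by auto
          have a4: "(X - U) - {z} = X \<inter> G2" using XG unfolding G2_def by blast
          have a5: "sum w (X \<inter> U) = c * s1" unfolding s1_def sum_distrib_left
            by (rule sum.cong) (auto simp: w_def zU)
          have a6: "sum w (X \<inter> G2) = s2" unfolding s2_def by (rule sum.cong) (auto simp: w_def G2_def)
          have a7: "w z = wz" by (simp add: w_def)
          show ?thesis using a1 a2 a3 a4 a5 a6 a7 by auto
        qed
        have s1le: "s1 \<le> W1" unfolding s1_def W1_def using fU by (intro sum_mono2) auto
        have s2le: "s2 \<le> W2" unfolding s2_def W2_def using fG2 by (intro sum_mono2) auto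
        have e1: "(\<exists>A\<in>H1. A \<subseteq> X \<inter> U) \<longleftrightarrow> t1 \<le> s1" unfolding s1_def by (rule th1[rule_format]) blast
        have e2: "(\<exists>A\<in>H2. A \<subseteq> X \<inter> G2) \<longleftrightarrow> t2 \<le> s2" unfolding s2_def by (rule th2[rule_format]) blast
        have key: "(\<exists>A\<in>M. A \<subseteq> X) \<longleftrightarrow> (z\<in>X \<and> (\<exists>A\<in>H1. A \<subseteq> X\<inter>U)) \<or> (U \<subseteq> X \<and> (\<exists>A\<in>H2. A \<subseteq> X \<inter> G2))"
        proof
          assume "\<exists>A\<in>M. A\<subseteq>X"
          then obtain A where A: "A\<in>M" "A\<subseteq>X" by blast
          show "(z\<in>X \<and> (\<exists>A\<in>H1. A \<subseteq> X\<inter>U)) \<or> (U \<subseteq> X \<and> (\<exists>A\<in>H2. A \<subseteq> X \<inter> G2))"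
          proof (cases "z\<in>A")
            case True
            then have i1: "A - {z} \<in> H1" unfolding H1_def using A by blast
            then have "A - {z} \<subseteq> X\<inter>U" unfolding U_def using A by blast
            then show ?thesis using True A i1 by blast
          next
            case False
            have "U \<subseteq> A" using bU A False by blast
            moreover have "A - U \<in> H2" unfolding H2_def using A False by blast
            moreover have "A - U \<subseteq> X \<inter> G2" using A False MH less.prems(2) unfolding G2_def by blast
            ultimately show ?thesis using A by blast
          qed
        next
          assume "(z\<in>X \<and> (\<exists>A\<in>H1. A \<subseteq> X\<inter>U)) \<or> (U \<subseteq> X \<and> (\<exists>A\<in>H2. A \<subseteq> X \<inter> G2))"
          then show "\<exists>A\<in>M. A\<subseteq>X"
          proof
            assume "z\<in>X \<and> (\<exists>A\<in>H1. A \<subseteq> X\<inter>U)"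
            then obtain a where "a\<in>M" "z\<in>a" "a-{z} \<subseteq> X\<inter>U" "z\<in>X" unfolding H1_def by blast
            then show ?thesis by blast
          next
            assume "U \<subseteq> X \<and> (\<exists>A\<in>H2. A \<subseteq> X \<inter> G2)"
            then obtain b where "b\<in>M" "b - U \<subseteq> X \<inter> G2" "U \<subseteq> X" unfolding H2_def by blast
            then show ?thesis by blast
          qed
        qed
        have lhs: "(\<exists>A\<in>H. A\<subseteq>X) \<longleftrightarrow> (z\<in>X \<and> t1 \<le> s1) \<or> (U\<subseteq>X \<and> t2 \<le> s2)"
          by (simp only: contain[of X] key e1 e2)
        have UX: "s1 = W1" if "U \<subseteq> X" unfolding s1_def W1_def using that by (simp add: Int_absorb1)
        have nUX: "s1 + 1 \<le> W1" if nU0: "\<not> U \<subseteq> X"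
        proof -
          obtain u where u: "u \<in> U" "u \<notin> X" using nU0 by blast
          have "W1 = sum w1 (U \<inter> X) + sum w1 (U - X)" unfolding W1_def using fU by (rule sum.Int_Diff)
          moreover have "sum w1 (U - X) = w1 u + sum w1 (U - X - {u})" using u fU by (simp add: sum.remove)
          moreover have "U \<inter> X = X \<inter> U" by blast
          moreover have "1 \<le> w1 u" using pos u by blast
          ultimately show ?thesis unfolding s1_def by simp
        qed
        have cW: "c * (W1 - t1) + c * t1 = c * W1" using t1W by (simp add: add_mult_distrib2[symmetric])
        show "(\<exists>A\<in>H. A\<subseteq>X) \<longleftrightarrow> T \<le> sum w X"
        proof (cases "(z\<in>X \<and> t1 \<le> s1) \<or> (U\<subseteq>X \<and> t2 \<le> s2)")
          case True
          have "T \<le> sum w X"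
          proof (cases "z\<in>X \<and> t1 \<le> s1")
            case True
            have "c * t1 \<le> c * s1" using True by simp
            moreover have "sum w X = c * (W1 - t1) + t2 + c * s1 + s2" using sumw True unfolding wz_def by simp
            ultimately show ?thesis using cW unfolding T_def by linarith
          next
            case False
            then have "U\<subseteq>X" "t2 \<le> s2" using \<open>(z\<in>X \<and> t1 \<le> s1) \<or> (U\<subseteq>X \<and> t2 \<le> s2)\<close> by auto
            then show ?thesis using sumw UX unfolding T_def by simp
          qed
          then show ?thesis using True lhs by simp
        next
          case False
          have "sum w X < T"
          proof (cases "z \<in> X")
            case zX: True
            then have "s1 + 1 \<le> t1" using False by simp
            then have "c * s1 + c \<le> c * t1" by (rule mult_step)
            then have "sum w X + c \<le> c * (W1 - t1) + c * t1 + t2 + s2" using sumw zX unfolding wz_def by simp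
            then show ?thesis using s2le cW unfolding T_def c_def by linarith
          next
            case zX: False
            show ?thesis
            proof (cases "U \<subseteq> X")
              case True
              then have "s2 < t2" using False by simp
              then show ?thesis using sumw zX UX[OF True] unfolding T_def by simp
            next
              case nU: False
              have "c * s1 + c \<le> c * W1" using nUX[OF nU] by (rule mult_step)
              then show ?thesis using sumw zX s2le unfolding T_def c_def by simp
            qed
          qed
          then show ?thesis using False lhs by simp
        qed
      qed
    qed
  qed
qed


lemma F2_found:
  assumes sym: "\<forall>x y. E x y \<longrightarrow> E y x" and irr: "\<forall>x. \<not> E x x"
    and K: "a\<in>K" "b\<in>K" "c\<in>K" "d\<in>K" and cl: "is_clique K E" and IK: "i \<notin> K" "j \<notin> K"
    and nij: "\<not> E i j" and ab: "a \<noteq> b" and cd: "c \<noteq> d"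
    and ia: "E i a" "E i b" "\<not> E i c" "\<not> E i d"
    and ja: "E j c" "E j d" "\<not> E j a" "\<not> E j b" and ij: "i \<noteq> j"
    and sub: "{a,b,c,d,i,j} \<subseteq> U"
  shows "contains_induced_F2 U E"
proof -
  have EK: "E x y" if "x \<in> K" "y \<in> K" "x \<noteq> y" for x y using cl that unfolding is_clique_def by blast
  have dd: "a \<noteq> b" "a \<noteq> c" "a \<noteq> d" "a \<noteq> i" "a \<noteq> j" "b \<noteq> c" "b \<noteq> d" "b \<noteq> i" "b \<noteq> j" "c \<noteq> d" "c \<noteq> i" "c \<noteq> j" "d \<noteq> i" "d \<noteq> j" "i \<noteq> j" using K IK ab cd ia ja ij by auto
  have ee: "\<not> E a a" "E a b" "E a c" "E a d" "E a i" "\<not> E a j" "E b a" "\<not> E b b" "E b c" "E b d" "E b i" "\<not> E b j" "E c a" "E c b" "\<not> E c c" "E c d" "\<not> E c i" "E c j" "E d a" "E d b" "E d c" "\<not> E d d" "\<not> E d i" "E d j" "E i a" "E i b" "\<not> E i c" "\<not> E i d" "\<not> E i i" "\<not> E i j" "\<not> E j a" "\<not> E j b" "E j c" "E j d" "\<not> E j i" "\<not> E j j"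
    using EK K dd sym irr ia ja nij by blast+
  define f where "f = (!) [a,b,c,d,i,j]"
  have six: "{0..<6::nat} = {0,1,2,3,4,5}" by auto
  have inj: "inj_on f {0..<6}" unfolding f_def by (rule inj_on_nth) (use dd in auto)
  have img: "f ` {0..<6} \<subseteq> U" unfolding six f_def using sub by simp
  have tab: "\<forall>p\<in>{0..<6}. \<forall>q\<in>{0..<6}. E (f p) (f q) \<longleftrightarrow> F2_edge p q"
    unfolding six f_def by (simp add: F2_edge_def doubleton_eq_iff ee)
  show ?thesis unfolding contains_induced_F2_def using inj img tab by blast
qed


lemma clE: "is_clique K E \<Longrightarrow> x \<in> K \<Longrightarrow> y \<in> K \<Longrightarrow> x \<noteq> y \<Longrightarrow> E x y"
  by (simp add: is_clique_def)

lemma clique_cd: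
  assumes fin: "finite U" and cl: "is_clique U E"
  shows "connected_domishold U E"
  unfolding connected_domishold_def
proof (rule disjI2, rule exI[of _ "\<lambda>_. 1"], rule exI[of _ 1], intro conjI allI impI)
  fix S assume SU: "S \<subseteq> U"
  have fS: "finite S" using fin SU finite_subset by blast
  show "(1 \<le> sum (\<lambda>_. 1::real) S) \<longleftrightarrow> connected_dominating_set U E S"
  proof
    assume "1 \<le> sum (\<lambda>_. 1::real) S"
    then have Sne: "S \<noteq> {}" by auto
    then obtain u where uS: "u \<in> S" by blast
    have dom: "\<forall>v\<in>U - S. \<exists>u\<in>S. E v u"
    proof
      fix v assume "v \<in> U - S"
      then have "v \<in> U" "v \<noteq> u" "u \<in> U" using uS SU by auto
      then have "E v u" using clE[OF cl] by blast
      then show "\<exists>u\<in>S. E v u" using uS by blast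
    qed
    have con: "connected_on S E" unfolding connected_on_def
    proof (intro conjI ballI)
      show "S \<noteq> {}" by fact
      fix x y assume xy: "x \<in> S" "y \<in> S"
      show "(\<lambda>a b. a \<in> S \<and> b \<in> S \<and> E a b)\<^sup>*\<^sup>* x y"
      proof (cases "x = y")
        case True then show ?thesis by simp
      next
        case False
        then have "E x y" using clE[OF cl] xy SU by blast
        then show ?thesis using xy by (intro r_into_rtranclp) simp
      qed
    qed
    show "connected_dominating_set U E S" unfolding connected_dominating_set_def using SU dom con by blast
  next
    assume "connected_dominating_set U E S"
    then have "S \<noteq> {}" unfolding connected_dominating_set_def connected_on_def by blast
    then have "card S \<ge> 1" using fS by (simp add: Suc_le_eq card_gt_0_iff)
    then show "1 \<le> sum (\<lambda>_. 1::real) S" by simp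
  qed
qed auto

lemma cds_char:
  assumes sym: "\<forall>x y. E x y \<longrightarrow> E y x"
    and part: "K \<inter> I = {}" "K \<union> I = U" and cl: "is_clique K E" and ind: "is_independent I E"
    and ncl: "\<not> is_clique U E" and SU: "S \<subseteq> U"
  shows "connected_dominating_set U E S \<longleftrightarrow> (\<forall>i\<in>I. \<exists>k\<in>K \<inter> S. E i k)"
proof
  assume cds: "connected_dominating_set U E S"
  have nbK: "u \<in> K" if "i \<in> I" "u \<in> U" "E i u" for i u
    using that ind part unfolding is_independent_def by blast
  show "\<forall>i\<in>I. \<exists>k\<in>K \<inter> S. E i k"
  proof
    fix i assume iI: "i \<in> I"
    have iU: "i \<in> U" using iI part by blast
    show "\<exists>k\<in>K \<inter> S. E i k"
    proof (cases "i \<in> S")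
      case False
      then obtain u where "u \<in> S" "E i u" using cds iU unfolding connected_dominating_set_def by blast
      then show ?thesis using nbK[OF iI] SU by blast
    next
      case iS: True
      show ?thesis
      proof (cases "\<exists>y\<in>S. y \<noteq> i")
        case True
        then obtain y where y: "y \<in> S" "y \<noteq> i" by blast
        have "(\<lambda>a b. a \<in> S \<and> b \<in> S \<and> E a b)\<^sup>*\<^sup>* i y"
          using cds iS y unfolding connected_dominating_set_def connected_on_def by blast
        then obtain m where "m \<in> S" "E i m"
          using y(2) by (cases rule: converse_rtranclpE) auto
        then show ?thesis using nbK[OF iI] SU by blast
      next
        case False
        then have Si: "S = {i}" using iS by blast
        have adj: "E v i" if "v \<in> U" "v \<noteq> i" for v
          using cds that Si unfolding connected_dominating_set_def by blast
        have "is_clique U E" unfolding is_clique_def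
        proof (intro ballI impI)
          fix x y assume xy: "x \<in> U" "y \<in> U" "x \<noteq> y"
          show "E x y"
          proof (cases "x = i")
            case True then show ?thesis using adj[of y] xy sym by blast
          next
            case xi: False
            show ?thesis
            proof (cases "y = i")
              case True then show ?thesis using adj[of x] xy by blast
            next
              case yi: False
              have "x \<in> K" using nbK[OF iI xy(1)] adj[OF xy(1) xi] sym by blast
              moreover have "y \<in> K" using nbK[OF iI xy(2)] adj[OF xy(2) yi] sym by blast
              ultimately show ?thesis using clE[OF cl] xy by blast
            qed
          qed
        qed
        then show ?thesis using ncl by blast
      qed
    qed
  qed
next
  assume P: "\<forall>i\<in>I. \<exists>k\<in>K \<inter> S. E i k"
  have "I \<noteq> {}"
  proof
    assume "I = {}"
    then have "U = K" using part by blast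
    then show False using ncl cl by simp
  qed
  then obtain k0 where k0: "k0 \<in> K" "k0 \<in> S" using P by blast
  let ?R = "\<lambda>a b. a \<in> S \<and> b \<in> S \<and> E a b"
  have dom: "\<forall>v\<in>U - S. \<exists>u\<in>S. E v u"
  proof
    fix v assume v: "v \<in> U - S"
    show "\<exists>u\<in>S. E v u"
    proof (cases "v \<in> I")
      case True then show ?thesis using P by blast
    next
      case False
      then have "v \<in> K" using v part by blast
      moreover have "v \<noteq> k0" using v k0 by blast
      ultimately have "E v k0" using clE[OF cl] k0 by blast
      then show ?thesis using k0 by blast
    qed
  qed
  have toK: "?R\<^sup>*\<^sup>* x k0 \<and> ?R\<^sup>*\<^sup>* k0 x" if xS: "x \<in> S" for x
  proof (cases "x \<in> K")
    case True
    show ?thesis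
    proof (cases "x = k0")
      case True then show ?thesis by simp
    next
      case False
      then have "E x k0" "E k0 x" using clE[OF cl] k0 \<open>x \<in> K\<close> by auto
      then show ?thesis using xS k0 by (auto intro: r_into_rtranclp)
    qed
  next
    case False
    then have xI: "x \<in> I" using xS SU part by blast
    then obtain k where k: "k \<in> K" "k \<in> S" "E x k" using P by blast
    have Ekx: "E k x" using k sym by blast
    have kk0: "?R\<^sup>*\<^sup>* k k0 \<and> ?R\<^sup>*\<^sup>* k0 k"
    proof (cases "k = k0")
      case True then show ?thesis by simp
    next
      case False
      then have "E k k0" "E k0 k" using clE[OF cl] k0 k by auto
      then show ?thesis using k k0 by (auto intro: r_into_rtranclp)
    qed
    have r1: "?R\<^sup>*\<^sup>* x k" using xS k by (intro r_into_rtranclp) simp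
    have r2: "?R\<^sup>*\<^sup>* k x" using xS k Ekx by (intro r_into_rtranclp) simp
    show ?thesis using rtranclp_trans[OF r1 conjunct1[OF kk0]] rtranclp_trans[OF conjunct2[OF kk0] r2] by blast
  qed
  have con: "connected_on S E" unfolding connected_on_def
  proof (intro conjI ballI)
    show "S \<noteq> {}" using k0 by blast
    fix x y assume "x \<in> S" "y \<in> S"
    then show "?R\<^sup>*\<^sup>* x y" using toK by (meson rtranclp_trans)
  qed
  show "connected_dominating_set U E S" unfolding connected_dominating_set_def using SU dom con by blast
qed


theorem mainTheorem12:
  fixes V :: "'a set" and E :: "'a \<Rightarrow> 'a \<Rightarrow> bool"
  assumes "simple_graph V E" and "split_graph V E" and "F2_free V E"
  shows "hereditarily_connected_domishold V E"
  unfolding hereditarily_connected_domishold_def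
proof (intro allI impI)
  fix U assume UV: "U \<subseteq> V"
  have finV: "finite V" and sym: "\<forall>x y. E x y \<longrightarrow> E y x" and irr: "\<forall>x. \<not> E x x"
    using assms(1) unfolding simple_graph_def by auto
  have finU: "finite U" using finV UV finite_subset by blast
  obtain K0 I0 where KI: "K0 \<inter> I0 = {}" "K0 \<union> I0 = V" "is_clique K0 E" "is_independent I0 E"
    using assms(2) unfolding split_graph_def by blast
  define K where "K = K0 \<inter> U"
  define I where "I = I0 \<inter> U"
  have part: "K \<inter> I = {}" "K \<union> I = U" using KI UV unfolding K_def I_def by auto
  have cl: "is_clique K E" using KI(3) unfolding K_def is_clique_def by blast
  have ind: "is_independent I E" using KI(4) unfolding I_def is_independent_def by blast
  have finK: "finite K" using finU unfolding K_def by simp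
  show "connected_domishold U E"
  proof (cases "is_clique U E")
    case True
    then show ?thesis using clique_cd finU by blast
  next
    case ncl: False
    define N where "N = (\<lambda>i. {k\<in>K. E i k})"
    have sp: "sp1 (N ` I)" unfolding sp1_def
    proof (intro ballI)
      fix A B assume "A \<in> N ` I" "B \<in> N ` I"
      then obtain i j where ij: "i \<in> I" "j \<in> I" "A = N i" "B = N j" by blast
      show "card (A - B) \<le> 1 \<or> card (B - A) \<le> 1"
      proof (rule ccontr)
        assume "\<not> (card (A - B) \<le> 1 \<or> card (B - A) \<le> 1)"
        then have c1: "\<not> card (A - B) \<le> Suc 0" and c2: "\<not> card (B - A) \<le> Suc 0" by auto
        have fA: "finite (A - B)" "finite (B - A)" using finK unfolding ij N_def by auto
        obtain a b where ab: "a \<in> A - B" "b \<in> A - B" "a \<noteq> b"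
          using c1 card_le_Suc0_iff_eq[OF fA(1)] by blast
        obtain c d where cd: "c \<in> B - A" "d \<in> B - A" "c \<noteq> d"
          using c2 card_le_Suc0_iff_eq[OF fA(2)] by blast
        have ijne: "i \<noteq> j" using ab ij by blast
        have "contains_induced_F2 V E"
        proof (rule F2_found[OF sym irr])
          show "a \<in> K" "b \<in> K" "c \<in> K" "d \<in> K" using ab cd unfolding ij N_def by auto
          show "is_clique K E" by (rule cl)
          show "i \<notin> K" "j \<notin> K" using ij part by auto
          show "\<not> E i j" using ind ij unfolding is_independent_def by blast
          show "a \<noteq> b" "c \<noteq> d" by fact+
          show "E i a" "E i b" "\<not> E i c" "\<not> E i d" using ab cd unfolding ij N_def by auto
          show "E j c" "E j d" "\<not> E j a" "\<not> E j b" using ab cd unfolding ij N_def by auto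
          show "i \<noteq> j" by fact
          have "{a,b,c,d} \<subseteq> K" "{i,j} \<subseteq> I" using ab cd ij unfolding N_def by auto
          then show "{a,b,c,d,i,j} \<subseteq> V" using part UV by auto
        qed
        then show False using assms(3) unfolding F2_free_def by blast
      qed
    qed
    have NK: "\<forall>A\<in>N ` I. A \<subseteq> K" unfolding N_def by blast
    obtain w :: "'a \<Rightarrow> nat" and t :: nat
      where th: "\<forall>X. X \<subseteq> K \<longrightarrow> ((\<exists>A\<in>N ` I. A \<subseteq> X) \<longleftrightarrow> t \<le> sum w X)"
      using thr[OF finK NK sp] by blast
    have Ine: "I \<noteq> {}"
    proof
      assume "I = {}"
      then have "U = K" using part by blast
      then show False using ncl cl by simp
    qed
    then obtain i0 where i0: "i0 \<in> I" by blast
    have "\<exists>A\<in>N ` I. A \<subseteq> K" using i0 NK by blast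
    then have tW: "t \<le> sum w K" by (rule iffD1[OF th[rule_format, OF order_refl]])
    define w' where "w' = (\<lambda>v. if v \<in> K then real (w v) else 0)"
    define t' where "t' = real (sum w K) - real t + 1"
    show ?thesis unfolding connected_domishold_def
    proof (rule disjI2, rule exI[of _ w'], rule exI[of _ t'], intro conjI allI impI)
      show "\<forall>x\<in>U. 0 \<le> w' x" unfolding w'_def by simp
      have "real t \<le> real (sum w K)" using tW by (rule of_nat_mono)
      then show "0 \<le> t'" unfolding t'_def by linarith
      fix S assume SU: "S \<subseteq> U"
      have fS: "finite S" using finU SU finite_subset by blast
      have sw: "sum w' S = real (sum w (K \<inter> S))"
      proof -
        have "sum w' S = sum w' (S \<inter> K) + sum w' (S - K)" using fS by (rule sum.Int_Diff)
        moreover have "sum w' (S - K) = 0" unfolding w'_def by simp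
        moreover have "sum w' (S \<inter> K) = sum (\<lambda>v. real (w v)) (S \<inter> K)" unfolding w'_def by simp
        moreover have "S \<inter> K = K \<inter> S" by blast
        ultimately show ?thesis by simp
      qed
      have sK: "sum w K = sum w (K \<inter> S) + sum w (K - S)" using finK by (rule sum.Int_Diff)
      have "connected_dominating_set U E S \<longleftrightarrow> (\<forall>i\<in>I. \<exists>k\<in>K \<inter> S. E i k)"
        by (rule cds_char[OF sym part cl ind ncl SU])
      also have "\<dots> \<longleftrightarrow> \<not> (\<exists>A\<in>N ` I. A \<subseteq> K - S)" by (auto simp: N_def)
      also have "\<dots> \<longleftrightarrow> \<not> t \<le> sum w (K - S)" using th[rule_format, of "K - S"] by simp
      also have "\<dots> \<longleftrightarrow> sum w (K - S) + 1 \<le> t" by linarith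
      also have "\<dots> \<longleftrightarrow> real (sum w (K - S)) + 1 \<le> real t"
        by (metis of_nat_1 of_nat_add of_nat_le_iff)
      also have "\<dots> \<longleftrightarrow> t' \<le> sum w' S" unfolding sw t'_def sK of_nat_add by linarith
      finally show "t' \<le> sum w' S \<longleftrightarrow> connected_dominating_set U E S" by simp
    qed
  qed
qed

end
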